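(* Let $M\ge 3$ and, for $s\ge 2$, let $V(s)$ denote the speed, i.e. the almost sure limit $\lim_{t\to\infty}d(o,S_{1,t})/t$, of the $2$-leg spider walk with span bounded by $s$ for the continuous-time simple random walk on the homogeneous tree $\mathbb T_M$. Then $V(s)\to 0$ as $s\to\infty$.
   Context: $\mathbb T_M$ is the infinite tree in which every vertex has degree $M$, with root $o$ and graph distance $d$. The continuous-time simple random walk has rate $1$ to each neighbour. The $2$-leg spider walk with span bounded by $s$ is the continuous-time Markov process $S_t=(S_{1,t},S_{2,t})$ on $\{(x_1,x_2): x_1\ne x_2,\ d(x_1,x_2)\le s\}$ in which each leg jumps to each neighbouring vertex at rate $1$, a jump being performed only if afterwards the two legs are on distinct vertices at distance at most $s$ (otherwise it is suppressed). *)

theory Defs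
  imports "HOL-Probability.Probability"
begin

text \<open>The M-regular tree T_M: vertices are reduced words over the alphabet {0..<M}
  (no two consecutive equal letters), i.e. the Cayley graph of the free product of
  M copies of Z/2. The root o is the empty word.\<close>

definition tree_vertex :: "nat \<Rightarrow> nat list \<Rightarrow> bool" where
  "tree_vertex M w \<longleftrightarrow> set w \<subseteq> {..<M} \<and> (\<forall>i. Suc i < length w \<longrightarrow> w ! i \<noteq> w ! Suc i)"

definition tree_root :: "nat list" where
  "tree_root = []"

definition tree_nbr :: "nat list \<Rightarrow> nat \<Rightarrow> nat list" where
  "tree_nbr x j = (if x = [] then [j] else if j = last x then butlast x else x @ [j])"

fun lcp_len :: "nat list \<Rightarrow> nat list \<Rightarrow> nat" where
  "lcp_len (a # xs) (b # ys) = (if a = b then Suc (lcp_len xs ys) else 0)"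
| "lcp_len _ _ = 0"

definition tree_dist :: "nat list \<Rightarrow> nat list \<Rightarrow> nat" where
  "tree_dist x y = length x + length y - 2 * lcp_len x y"

type_synonym spider_state = "nat list \<times> nat list"

definition spider_move :: "nat \<Rightarrow> nat \<times> nat \<Rightarrow> spider_state \<Rightarrow> spider_state" where
  "spider_move s c st =
     (let (l, j) = c; (x1, x2) = st in
      if l = 0 then (let y = tree_nbr x1 j in
                     if y \<noteq> x2 \<and> tree_dist y x2 \<le> s then (y, x2) else (x1, x2))
      else (let y = tree_nbr x2 j in
                     if x1 \<noteq> y \<and> tree_dist x1 y \<le> s then (x1, y) else (x1, x2)))"

text \<open>Uniformized construction of the continuous-time spider walk: all 2M attempted
  moves (leg, neighbour) occur at rate 1 each, i.e. at total rate 2M an i.i.d. uniform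
  attempt is made.\<close>
definition spider_step_measure :: "nat \<Rightarrow> ((nat \<times> nat) \<times> real) measure" where
  "spider_step_measure M =
     measure_pmf (pmf_of_set ({0, 1} \<times> {..<M}))
       \<Otimes>\<^sub>M density lborel (exponential_density (2 * real M))"

definition spider_space :: "nat \<Rightarrow> ((nat \<times> nat) \<times> real) stream measure" where
  "spider_space M = stream_space (spider_step_measure M)"

primrec spider_chain :: "nat \<Rightarrow> ((nat \<times> nat) \<times> real) stream \<Rightarrow> nat \<Rightarrow> spider_state" where
  "spider_chain s \<omega> 0 = (tree_root, [0])"
| "spider_chain s \<omega> (Suc k) = spider_move s (fst (\<omega> !! k)) (spider_chain s \<omega> k)"

definition spider_njumps :: "((nat \<times> nat) \<times> real) stream \<Rightarrow> real \<Rightarrow> nat" where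
  "spider_njumps \<omega> t = card {k. (\<Sum>i\<le>k. snd (\<omega> !! i)) \<le> t}"

definition spider_pos :: "nat \<Rightarrow> ((nat \<times> nat) \<times> real) stream \<Rightarrow> real \<Rightarrow> spider_state" where
  "spider_pos s \<omega> t = spider_chain s \<omega> (spider_njumps \<omega> t)"

end

theory Submission
  imports Defs
begin
lemma lcp_sym: "lcp_len x y = lcp_len y x"
  by (induction x y rule: lcp_len.induct) auto

lemma lcp_le: "lcp_len x y \<le> length x" "lcp_len x y \<le> length y"
  by (induction x y rule: lcp_len.induct) auto

lemma lcp_take: "take (lcp_len x y) x = take (lcp_len x y) y"
  by (induction x y rule: lcp_len.induct) auto

lemma lcp_append: "lcp_len (xs @ zs) y = (if lcp_len xs y < length xs then lcp_len xs y
   else length xs + lcp_len zs (drop (length xs) y))"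
proof (induction xs arbitrary: y)
  case Nil then show ?case by simp
next
  case (Cons a xs) then show ?case by (cases y) auto
qed

lemma lcp_takeL: "lcp_len (take n xs) y = min n (lcp_len xs y)"
proof (induction xs arbitrary: y n)
  case Nil then show ?case by simp
next
  case (Cons a xs) then show ?case by (cases y; cases n) auto
qed

lemma lcp_eq_iff: "x = y \<longleftrightarrow> (lcp_len x y = length x \<and> length x = length y)"
proof (induction x y rule: lcp_len.induct)
qed auto

lemma lcp_single: "lcp_len [j] y = (if y \<noteq> [] \<and> y ! 0 = j then 1 else 0)"
  by (cases y) auto

lemma lcp_full_prefix: "lcp_len x y = length x \<Longrightarrow> take (length x) y = x"
  using lcp_take[of x y] by simp

definition Fh :: "nat \<Rightarrow> nat \<Rightarrow> real" where
  "Fh s h = (if h \<le> s then real h ^ 2 / 2 else real s * real h - real s ^ 2 / 2)"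

definition Gf :: "nat \<Rightarrow> spider_state \<Rightarrow> real" where
  "Gf s st = Fh s (lcp_len (fst st) (snd st)) + (real (length (fst st)) - real (length (snd st)))^2"

definition valid :: "nat \<Rightarrow> nat \<Rightarrow> spider_state \<Rightarrow> bool" where
  "valid M s st \<longleftrightarrow> tree_vertex M (fst st) \<and> tree_vertex M (snd st) \<and> fst st \<noteq> snd st
     \<and> tree_dist (fst st) (snd st) \<le> s"

definition Lf :: "nat \<Rightarrow> nat \<Rightarrow> nat \<Rightarrow> nat \<Rightarrow> nat \<Rightarrow> real" where
  "Lf s M h a b = (let u = real a - real b; D = a + b - 2 * h in
    if h < a then (if a - 1 = h \<and> h = b then 0 else 1 - 2 * u)
          + real (M - 1) * (if D + 1 \<le> s then 2 * u + 1 else 0)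
    else if a = 0 then (if b = 1 then 0 else Fh s 1 - Fh s 0 + 1 - 2 * real b)
          + real (M - 1) * (if b + 1 \<le> s then 1 - 2 * real b else 0)
    else (if D + 1 \<le> s then Fh s (a - 1) - Fh s a + 1 + 2 * real D else 0)
       + (if D = 1 then 0 else Fh s (a + 1) - Fh s a + 1 - 2 * real D)
       + real (M - 2) * (if D + 1 \<le> s then 1 - 2 * real D else 0))"

lemma sum_one_special:
  assumes "k < M" "\<And>j. j < M \<Longrightarrow> j \<noteq> k \<Longrightarrow> f j = c"
  shows "(\<Sum>j<M. f j) = f k + real (M - 1) * (c::real)"
proof -
  have "(\<Sum>j<M. f j) = f k + (\<Sum>j\<in>{..<M} - {k}. f j)"
    using assms(1) by (simp add: sum.remove)
  also have "(\<Sum>j\<in>{..<M} - {k}. f j) = (\<Sum>j\<in>{..<M} - {k}. c)"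
    using assms(2) by (intro sum.cong) auto
  also have "\<dots> = real (M - 1) * c" using assms(1) by simp
  finally show ?thesis .
qed

lemma sum_two_special:
  assumes "k1 < M" "k2 < M" "k1 \<noteq> k2" "\<And>j. j < M \<Longrightarrow> j \<noteq> k1 \<Longrightarrow> j \<noteq> k2 \<Longrightarrow> f j = c"
  shows "(\<Sum>j<M. f j) = f k1 + f k2 + real (M - 2) * (c::real)"
proof -
  have "(\<Sum>j<M. f j) = f k1 + (\<Sum>j\<in>{..<M} - {k1}. f j)"
    using assms(1) by (simp add: sum.remove)
  also have "(\<Sum>j\<in>{..<M} - {k1}. f j) = f k2 + (\<Sum>j\<in>{..<M} - {k1} - {k2}. f j)"
    using assms(2,3) by (subst sum.remove[of _ k2]) auto
  also have "(\<Sum>j\<in>{..<M} - {k1} - {k2}. f j) = (\<Sum>j\<in>{..<M} - {k1} - {k2}. c)"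
    using assms(4) by (intro sum.cong) auto
  also have "\<dots> = real (M - 2) * c" using assms(1,2,3) by (simp add: card_Diff_singleton_if)
  finally show ?thesis by simp
qed

lemma tree_vertex_nth: "tree_vertex M w \<Longrightarrow> i < length w \<Longrightarrow> w ! i < M"
  unfolding tree_vertex_def using nth_mem by blast

lemma tree_vertex_red: "tree_vertex M w \<Longrightarrow> Suc i < length w \<Longrightarrow> w ! i \<noteq> w ! Suc i"
  unfolding tree_vertex_def by blast

lemma tree_vertex_nbr:
  assumes "tree_vertex M x" "j < M" shows "tree_vertex M (tree_nbr x j)"
proof -
  have set: "set x \<subseteq> {..<M}" using assms(1) unfolding tree_vertex_def by blast
  have red: "\<And>i. Suc i < length x \<Longrightarrow> x ! i \<noteq> x ! Suc i" using assms(1) unfolding tree_vertex_def by blast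
  show ?thesis
  proof (cases "x = []")
    case True then show ?thesis using assms(2) by (auto simp: tree_nbr_def tree_vertex_def)
  next
    case False
    show ?thesis
    proof (cases "j = last x")
      case True
      have "set (butlast x) \<subseteq> {..<M}" using set by (meson in_set_butlastD subset_iff)
      moreover have "butlast x ! i \<noteq> butlast x ! Suc i" if "Suc i < length (butlast x)" for i
        using that red[of i] by (simp add: nth_butlast)
      ultimately show ?thesis using False True by (simp add: tree_nbr_def tree_vertex_def)
    next
      case jn: False
      have lastx: "x ! (length x - 1) = last x" using False by (simp add: last_conv_nth)
      have "(x @ [j]) ! i \<noteq> (x @ [j]) ! Suc i" if "Suc i < length (x @ [j])" for i
      proof (cases "Suc i < length x")
        case True then show ?thesis using red[of i] by (simp add: nth_append)
      next
        case False
        then have i: "i = length x - 1" using that by simp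
        show ?thesis using lastx jn i False by (auto simp: nth_append)
      qed
      then show ?thesis using False jn set assms(2) by (simp add: tree_nbr_def tree_vertex_def)
    qed
  qed
qed

lemma lcp_butlast: "x \<noteq> [] \<Longrightarrow> lcp_len (butlast x) y = min (length x - 1) (lcp_len x y)"
  by (simp add: butlast_conv_take lcp_takeL)

lemma lcp_snoc: "lcp_len (x @ [j]) y = (if lcp_len x y < length x then lcp_len x y
   else length x + (if length x < length y \<and> y ! length x = j then 1 else 0))"
  by (auto simp: lcp_append lcp_single nth_drop)

lemma mv0: "spider_move s (0, j) (x1, x2) = (if tree_nbr x1 j \<noteq> x2 \<and> tree_dist (tree_nbr x1 j) x2 \<le> s
   then (tree_nbr x1 j, x2) else (x1, x2))"
  by (simp add: spider_move_def Let_def)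

lemma Gf_move0:
  "Gf s (spider_move s (0, j) (x1, x2)) =
    (let y = tree_nbr x1 j; l = lcp_len y x2 in
     if \<not> (l = length y \<and> length y = length x2) \<and> length y + length x2 - 2 * l \<le> s
     then Fh s l + (real (length y) - real (length x2))^2 else Gf s (x1, x2))"
  unfolding mv0 Let_def tree_dist_def using lcp_eq_iff[of "tree_nbr x1 j" x2]
  by (auto simp: Gf_def)

lemma legsum:
  assumes v: "valid M s (x1, x2)"
  shows "(\<Sum>j<M. Gf s (spider_move s (0, j) (x1, x2))) =
     real M * Gf s (x1, x2) + Lf s M (lcp_len x1 x2) (length x1) (length x2)"
proof -
  define h where "h = lcp_len x1 x2"
  define a where "a = length x1"
  define b where "b = length x2"
  have Gx: "Gf s (x1, x2) = Fh s h + (real a - real b)^2" by (simp add: Gf_def h_def a_def b_def)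
  have tv1: "tree_vertex M x1" and tv2: "tree_vertex M x2" and ne: "x1 \<noteq> x2"
    and ds: "a + b - 2 * h \<le> s"
    using v by (auto simp: valid_def tree_dist_def h_def a_def b_def)
  have ha: "h \<le> a" and hb: "h \<le> b" using lcp_le h_def a_def b_def by auto
  define f where "f j = Gf s (spider_move s (0, j) (x1, x2))" for j
  show ?thesis
  proof (cases "h < a")
    case True
    then have x1ne: "x1 \<noteq> []" using a_def by auto
    define k where "k = last x1"
    have kM: "k < M" using tv1 x1ne unfolding k_def by (simp add: last_conv_nth tree_vertex_nth a_def)
    have a1: "real (a - 1) = real a - 1" using True by simp
    have fk: "f k = Gf s (x1, x2) + (if a - 1 = h \<and> h = b then 0 else 1 - 2 * (real a - real b))"
    proof -
      have n: "tree_nbr x1 k = butlast x1" using x1ne k_def by (simp add: tree_nbr_def)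
      have l: "lcp_len (butlast x1) x2 = h" using x1ne True by (simp add: lcp_butlast h_def a_def)
      have le: "length (butlast x1) = a - 1" by (simp add: a_def)
      show ?thesis unfolding f_def Gf_move0 Let_def n l le b_def[symmetric] using ds True a1
        by (auto simp: Gx power2_eq_square algebra_simps)
    qed
    have fj: "f j = Gf s (x1, x2) + (if a + b - 2 * h + 1 \<le> s then 2 * (real a - real b) + 1 else 0)"
      if "j < M" "j \<noteq> k" for j
    proof -
      have n: "tree_nbr x1 j = x1 @ [j]" using x1ne k_def that by (simp add: tree_nbr_def)
      have l: "lcp_len (x1 @ [j]) x2 = h" using True by (simp add: lcp_snoc h_def a_def)
      have e: "a + 1 + b - 2 * h = a + b - 2 * h + 1" using True hb by simp
      show ?thesis unfolding f_def Gf_move0 Let_def n l length_append_singleton a_def[symmetric] b_def[symmetric]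
        using True e by (auto simp: Gx power2_eq_square algebra_simps)
    qed
    have "(\<Sum>j<M. f j) = f k + real (M - 1) * (Gf s (x1, x2) + (if a + b - 2 * h + 1 \<le> s then 2 * (real a - real b) + 1 else 0))"
      by (rule sum_one_special[OF kM fj])
    also have "\<dots> = real M * Gf s (x1, x2) + Lf s M h a b"
      using kM True unfolding fk Lf_def Let_def by (simp add: of_nat_diff algebra_simps)
    finally show ?thesis unfolding f_def h_def a_def b_def .
  next
    case False
    then have hA: "h = a" using ha by simp
    have pre: "take a x2 = x1" using lcp_full_prefix[of x1 x2] hA h_def a_def by simp
    have ab: "a < b"
    proof (rule ccontr)
      assume "\<not> a < b" then have "a = b" using hA hb by simp
      then have "x1 = x2" using hA lcp_eq_iff[of x1 x2] h_def a_def b_def by simp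
      then show False using ne by simp
    qed
    have x2a: "x2 ! a < M" using tv2 ab b_def tree_vertex_nth by blast
    show ?thesis
    proof (cases "a = 0")
      case a0: True
      then have x1e: "x1 = []" using a_def by simp
      define k where "k = x2 ! 0"
      have kM: "k < M" using x2a a0 k_def by simp
      have x2ne: "x2 \<noteq> []" using ab b_def by auto
      have fk: "f k = Gf s (x1, x2) + (if b = 1 then 0 else Fh s 1 - Fh s 0 + 1 - 2 * real b)"
      proof -
        have n: "tree_nbr x1 k = [k]" using x1e by (simp add: tree_nbr_def)
        have l: "lcp_len [k] x2 = 1" using x2ne k_def by (simp add: lcp_single)
        show ?thesis unfolding f_def Gf_move0 Let_def n l b_def[symmetric] using ds a0 hA ab
          by (auto simp: Gx power2_eq_square algebra_simps)
      qed
      have fj: "f j = Gf s (x1, x2) + (if b + 1 \<le> s then 1 - 2 * real b else 0)"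
        if "j < M" "j \<noteq> k" for j
      proof -
        have n: "tree_nbr x1 j = [j]" using x1e by (simp add: tree_nbr_def)
        have l: "lcp_len [j] x2 = 0" using that k_def by (simp add: lcp_single)
        show ?thesis unfolding f_def Gf_move0 Let_def n l b_def[symmetric] using a0 hA
          by (auto simp: Gx power2_eq_square algebra_simps)
      qed
      have "(\<Sum>j<M. f j) = f k + real (M - 1) * (Gf s (x1, x2) + (if b + 1 \<le> s then 1 - 2 * real b else 0))"
        by (rule sum_one_special[OF kM fj])
      also have "\<dots> = real M * Gf s (x1, x2) + Lf s M h a b"
        using kM a0 hA unfolding fk Lf_def Let_def by (simp add: of_nat_diff algebra_simps)
      finally show ?thesis unfolding f_def h_def a_def b_def .
    next
      case apos: False
      then have x1ne: "x1 \<noteq> []" using a_def by auto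
      define k1 where "k1 = last x1"
      define k2 where "k2 = x2 ! a"
      have k1M: "k1 < M" using tv1 x1ne unfolding k1_def by (simp add: last_conv_nth tree_vertex_nth a_def)
      have k2M: "k2 < M" using x2a k2_def by simp
      have lastx1: "last x1 = x2 ! (a - 1)"
        using x1ne apos pre by (metis a_def last_conv_nth nth_take diff_less less_numeral_extra(1) gr0I)
      have k12: "k1 \<noteq> k2"
        using tree_vertex_red[OF tv2, of "a - 1"] apos ab lastx1 b_def k1_def k2_def by simp
      have a1: "real (a - 1) = real a - 1" using apos by simp
      have D: "a + b - 2 * h = b - a" using hA ab by simp
      have fk1: "f k1 = Gf s (x1, x2) + (if b - a + 1 \<le> s then Fh s (a - 1) - Fh s a + 1 + 2 * real (b - a) else 0)"
      proof -
        have n: "tree_nbr x1 k1 = butlast x1" using x1ne k1_def by (simp add: tree_nbr_def)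
        have l: "lcp_len (butlast x1) x2 = a - 1" using x1ne hA by (simp add: lcp_butlast h_def a_def)
        have le: "length (butlast x1) = a - 1" by (simp add: a_def)
        have e: "a - 1 + b - 2 * (a - 1) = b - a + 1" using apos ab by simp
        show ?thesis unfolding f_def Gf_move0 Let_def n l le b_def[symmetric] e using ab a1 hA
          by (auto simp: Gx of_nat_diff power2_eq_square algebra_simps)
      qed
      have fk2: "f k2 = Gf s (x1, x2) + (if b - a = 1 then 0 else Fh s (a + 1) - Fh s a + 1 - 2 * real (b - a))"
      proof -
        have n: "tree_nbr x1 k2 = x1 @ [k2]" using x1ne k12 k1_def by (simp add: tree_nbr_def)
        have l: "lcp_len (x1 @ [k2]) x2 = a + 1" using hA ab k2_def
          by (simp add: lcp_snoc h_def a_def b_def)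
        show ?thesis unfolding f_def Gf_move0 Let_def n l length_append_singleton a_def[symmetric] b_def[symmetric]
          using ab hA ds by (auto simp: Gx of_nat_diff power2_eq_square algebra_simps)
      qed
      have fj: "f j = Gf s (x1, x2) + (if b - a + 1 \<le> s then 1 - 2 * real (b - a) else 0)"
        if "j < M" "j \<noteq> k1" "j \<noteq> k2" for j
      proof -
        have n: "tree_nbr x1 j = x1 @ [j]" using x1ne that k1_def by (simp add: tree_nbr_def)
        have l: "lcp_len (x1 @ [j]) x2 = a" using hA ab k2_def that
          by (simp add: lcp_snoc h_def a_def b_def)
        have e: "a + 1 + b - 2 * a = b - a + 1" using ab by simp
        show ?thesis unfolding f_def Gf_move0 Let_def n l length_append_singleton a_def[symmetric] b_def[symmetric] e
          using ab hA by (auto simp: Gx of_nat_diff power2_eq_square algebra_simps)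
      qed
      have "(\<Sum>j<M. f j) = f k1 + f k2 + real (M - 2) * (Gf s (x1, x2) + (if b - a + 1 \<le> s then 1 - 2 * real (b - a) else 0))"
        by (rule sum_two_special[OF k1M k2M k12 fj])
      also have "\<dots> = real M * Gf s (x1, x2) + Lf s M h a b"
        using k1M k2M k12 apos hA D unfolding fk1 fk2 Lf_def Let_def
        by (simp add: of_nat_diff algebra_simps)
      finally show ?thesis unfolding f_def h_def a_def b_def .
    qed
  qed
qed

lemma Fh_lt: "h \<le> s \<Longrightarrow> Fh s h = real h ^ 2 / 2" by (simp add: Fh_def)
lemma Fh_gt: "s \<le> h \<Longrightarrow> Fh s h = real s * real h - real s ^ 2 / 2"
  by (cases "h = s") (auto simp: Fh_def power2_eq_square)

lemma Fh_inc: "s \<ge> 1 \<Longrightarrow> 0 \<le> Fh s (h + 1) - Fh s h \<and> Fh s (h + 1) - Fh s h \<le> real s"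
proof -
  assume s: "s \<ge> 1"
  consider "h + 1 \<le> s" | "s \<le> h" by linarith
  then show ?thesis
  proof cases
    case 1
    then have "Fh s (h + 1) - Fh s h = real h + 1/2" by (simp add: Fh_lt power2_eq_square algebra_simps)
    moreover have "real h + 1 \<le> real s" using 1 by linarith
    ultimately show ?thesis by simp
  next
    case 2
    then have "Fh s (h + 1) - Fh s h = real s" by (simp add: Fh_gt algebra_simps)
    then show ?thesis by simp
  qed
qed

lemma Fh_conv: "s \<ge> 1 \<Longrightarrow> h \<ge> 1 \<Longrightarrow> Fh s (h + 1) + Fh s (h - 1) - 2 * Fh s h \<le> 1"
proof -
  assume s: "s \<ge> 1" and h: "h \<ge> 1"
  have rh: "real (h - 1) = real h - 1" using h by simp
  consider "h + 1 \<le> s" | "h = s" | "s + 1 \<le> h" by linarith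
  then show ?thesis
  proof cases
    case 1
    then have "Fh s (h + 1) + Fh s (h - 1) - 2 * Fh s h = 1" using rh
      by (simp add: Fh_lt power2_eq_square field_simps)
    then show ?thesis by simp
  next
    case 2
    then have "Fh s (h + 1) + Fh s (h - 1) - 2 * Fh s h = 1/2" using rh
      by (simp add: Fh_lt Fh_gt power2_eq_square field_simps)
    then show ?thesis by simp
  next
    case 3
    then have "Fh s (h + 1) + Fh s (h - 1) - 2 * Fh s h = 0" using rh
      by (simp add: Fh_gt power2_eq_square algebra_simps)
    then show ?thesis by simp
  qed
qed

lemma Fh_mono: "h \<le> k \<Longrightarrow> Fh s h \<le> Fh s k"
proof (induction k)
  case 0 then show ?case by simp
next
  case (Suc k)
  have "Fh s k \<le> Fh s (k + 1)"
  proof (cases "s = 0")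
    case True then show ?thesis by (simp add: Fh_def)
  next
    case False then show ?thesis using Fh_inc[of s k] by simp
  qed
  then show ?case using Suc by (cases "h = Suc k") auto
qed

lemma Fh_dec: "s \<ge> 1 \<Longrightarrow> h \<ge> 1 \<Longrightarrow> Fh s (h - 1) - Fh s h \<le> 0"
  using Fh_mono[of "h - 1" h s] by simp

lemma Fh_01: "s \<ge> 1 \<Longrightarrow> Fh s 1 - Fh s 0 = 1/2"
  unfolding Fh_def by auto

lemma Fh_nonneg: "0 \<le> Fh s h"
  using Fh_mono[of 0 h s] by (simp add: Fh_def)

lemma Fh_lower: "real s * real h - real s ^ 2 / 2 \<le> Fh s h"
proof (cases "h \<le> s")
  case True
  have "0 \<le> (real h - real s)^2 / 2" by simp
  then show ?thesis using True by (simp add: Fh_lt power2_eq_square algebra_simps)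
next
  case False then show ?thesis by (simp add: Fh_gt)
qed

lemma ineq_half:
  assumes "a < b" "b - a \<le> s" "s \<ge> 2" "M \<ge> 3"
  shows "Lf s M a a b + Lf s M a b a \<le> 4 * real M"
proof -
  define D where "D = b - a"
  have D1: "D \<ge> 1" and Ds: "D \<le> s" using assms D_def by auto
  have rD: "real b - real a = real D" using assms D_def by (simp add: of_nat_diff)
  have e1: "a + b - 2 * a = D" "b + a - 2 * a = D" using assms D_def by auto
  have rM1: "real (M - 1) = real M - 1" "real (M - 2) = real M - 2" using assms by auto
  show ?thesis
  proof (cases "a = 0")
    case True
    then have bD: "b = D" using D_def by simp
    have L1: "Lf s M a a b = (if D = 1 then 0 else 1/2 + 1 - 2 * real D)
          + (real M - 1) * (if D + 1 \<le> s then 1 - 2 * real D else 0)"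
      using True bD assms Fh_01[of s] rM1 by (simp add: Lf_def Let_def)
    have L2: "Lf s M a b a = (if D = 1 then 0 else 1 - 2 * real D)
          + (real M - 1) * (if D + 1 \<le> s then 2 * real D + 1 else 0)"
      using True bD assms rM1 by (auto simp: Lf_def Let_def)
    show ?thesis unfolding L1 L2 using D1 Ds assms
      by (cases "D = 1"; cases "D + 1 \<le> s") (auto simp: algebra_simps)
  next
    case False
    have L1: "Lf s M a a b = (if D + 1 \<le> s then Fh s (a - 1) - Fh s a + 1 + 2 * real D else 0)
       + (if D = 1 then 0 else Fh s (a + 1) - Fh s a + 1 - 2 * real D)
       + (real M - 2) * (if D + 1 \<le> s then 1 - 2 * real D else 0)"
      using False assms e1 rM1 by (simp add: Lf_def Let_def)
    have L2: "Lf s M a b a = (if D = 1 then 0 else 1 - 2 * real D)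
          + (real M - 1) * (if D + 1 \<le> s then 2 * real D + 1 else 0)"
      using False assms e1 rM1 rD D_def by (auto simp: Lf_def Let_def)
    have i1: "0 \<le> Fh s (a + 1) - Fh s a" "Fh s (a + 1) - Fh s a \<le> real s"
      using Fh_inc[of s a] assms by auto
    have i2: "Fh s (a + 1) + Fh s (a - 1) - 2 * Fh s a \<le> 1" using Fh_conv[of s a] assms False by auto
    have i3: "Fh s (a - 1) - Fh s a \<le> 0" using Fh_dec[of s a] assms False by auto
    show ?thesis unfolding L1 L2 using D1 Ds assms i1 i2 i3
      by (cases "D = 1"; cases "D + 1 \<le> s") (auto simp: algebra_simps)
  qed
qed

lemma ineq_full:
  assumes "h \<le> a" "h \<le> b" "\<not> (h = a \<and> h = b)" "a + b - 2 * h \<le> s" "s \<ge> 2" "M \<ge> 3"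
  shows "Lf s M h a b + Lf s M h b a \<le> 4 * real M"
proof -
  consider "h < a" "h < b" | "h = a" "a < b" | "h = b" "b < a" using assms by linarith
  then show ?thesis
  proof cases
    case 1
    have rM1: "real (M - 1) = real M - 1" using assms by auto
    have eq: "b + a - 2 * h = a + b - 2 * h" by simp
    have "Lf s M h a b + Lf s M h b a = 2 + (real M - 1) * (if a + b - 2 * h + 1 \<le> s then 2 else 0)"
      using 1 rM1 eq by (simp add: Lf_def Let_def algebra_simps)
    then show ?thesis using assms by auto
  next
    case 2 then show ?thesis using ineq_half[of a b s M] assms by simp
  next
    case 3 then show ?thesis using ineq_half[of b a s M] assms by (simp add: add.commute)
  qed
qed

lemma tree_dist_sym: "tree_dist x y = tree_dist y x"
  by (simp add: tree_dist_def lcp_sym)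

lemma valid_swap: "valid M s (x1, x2) \<Longrightarrow> valid M s (x2, x1)"
  by (auto simp: valid_def tree_dist_sym)

lemma move1_swap: "spider_move s (Suc 0, j) (x1, x2) = prod.swap (spider_move s (0, j) (x2, x1))"
  by (simp add: spider_move_def Let_def tree_dist_sym)

lemma Gf_swap: "Gf s (prod.swap st) = Gf s st"
  by (cases st) (simp add: Gf_def lcp_sym power2_commute)

lemma move_valid:
  assumes "valid M s st" "snd c < M" shows "valid M s (spider_move s c st)"
proof -
  obtain x1 x2 where st: "st = (x1, x2)" by fastforce
  obtain l j where c: "c = (l, j)" by fastforce
  have j: "j < M" using assms c by simp
  have tv: "tree_vertex M x1" "tree_vertex M x2" using assms st by (auto simp: valid_def)
  show ?thesis using assms tree_vertex_nbr[OF tv(1) j] tree_vertex_nbr[OF tv(2) j]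
    unfolding st c by (auto simp: spider_move_def Let_def valid_def)
qed

lemma drift:
  assumes v: "valid M s st" and M: "M \<ge> 3" and s: "s \<ge> 2"
  shows "(\<Sum>c\<in>{0,1} \<times> {..<M}. Gf s (spider_move s c st)) \<le> 2 * real M * Gf s st + 4 * real M"
proof -
  obtain x1 x2 where st: "st = (x1, x2)" by fastforce
  have v2: "valid M s (x2, x1)" using v st valid_swap by simp
  have "(\<Sum>c\<in>{0,1} \<times> {..<M}. Gf s (spider_move s c st))
      = (\<Sum>l\<in>{0::nat,1}. \<Sum>j<M. Gf s (spider_move s (l, j) st))"
    by (simp add: sum.cartesian_product)
  also have "\<dots> = (\<Sum>j<M. Gf s (spider_move s (0, j) (x1, x2))) + (\<Sum>j<M. Gf s (spider_move s (0, j) (x2, x1)))"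
    by (simp add: st move1_swap Gf_swap)
  also have "\<dots> = 2 * real M * Gf s st + (Lf s M (lcp_len x1 x2) (length x1) (length x2)
         + Lf s M (lcp_len x1 x2) (length x2) (length x1))"
    using legsum[OF v[unfolded st]] legsum[OF v2] by (simp add: st lcp_sym Gf_swap[of s "(x1,x2)", simplified])
  also have "\<dots> \<le> 2 * real M * Gf s st + 4 * real M"
  proof -
    have "lcp_len x1 x2 \<le> length x1" "lcp_len x1 x2 \<le> length x2" using lcp_le by auto
    moreover have "\<not> (lcp_len x1 x2 = length x1 \<and> lcp_len x1 x2 = length x2)"
      using v st lcp_eq_iff[of x1 x2] by (auto simp: valid_def)
    moreover have "length x1 + length x2 - 2 * lcp_len x1 x2 \<le> s"
      using v st by (simp add: valid_def tree_dist_def)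
    ultimately show ?thesis using ineq_full[of "lcp_len x1 x2" "length x1" "length x2" s M] M s by simp
  qed
  finally show ?thesis .
qed

lemma Gf_nonneg: "0 \<le> Gf s st"
  by (simp add: Gf_def Fh_nonneg)

lemma dist_bound:
  assumes v: "valid M s st" and s: "s \<ge> 1"
  shows "real (length (fst st)) \<le> Gf s st / real s + 3 * real s / 2"
proof -
  obtain x1 x2 where st: "st = (x1, x2)" by fastforce
  define h where "h = lcp_len x1 x2"
  have p: "length x1 - h \<le> s" using v st lcp_le[of x1 x2] by (simp add: valid_def tree_dist_def h_def) linarith
  have ha: "h \<le> length x1" using lcp_le h_def by auto
  have "real s * real h - real s ^ 2 / 2 \<le> Gf s st"
    using Fh_lower[of s h] by (simp add: st Gf_def h_def add_increasing2)
  moreover have "real (length x1) \<le> real h + real s" using p ha by linarith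
  ultimately have "real s * real (length x1) \<le> Gf s st + real s ^ 2 / 2 + real s * real s"
    using s by (smt (verit) mult_left_mono of_nat_0_le_iff distrib_left)
  then have "real (length x1) \<le> (Gf s st + real s ^ 2 / 2 + real s * real s) / real s"
    using s by (simp add: field_simps)
  also have "\<dots> = Gf s st / real s + 3 * real s / 2" using s by (simp add: field_simps power2_eq_square)
  finally show ?thesis by (simp add: st)
qed

lemma start_valid: "M \<ge> 1 \<Longrightarrow> s \<ge> 1 \<Longrightarrow> valid M s (tree_root, [0])"
  by (simp add: valid_def tree_root_def tree_vertex_def tree_dist_def)

lemma start_Gf: "Gf s (tree_root, [0]) = 1"
  by (simp add: Gf_def tree_root_def Fh_def)

definition tau :: "((nat \<times> nat) \<times> real) \<Rightarrow> real" where
  "tau x = max 0 (snd x)"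

primrec posn :: "nat \<Rightarrow> nat \<Rightarrow> spider_state \<Rightarrow> real \<Rightarrow> ((nat \<times> nat) \<times> real) stream \<Rightarrow> spider_state" where
  "posn s 0 st t \<omega> = st"
| "posn s (Suc n) st t \<omega> = (if tau (shd \<omega>) \<le> t
     then posn s n (spider_move s (fst (shd \<omega>)) st) (t - tau (shd \<omega>)) (stl \<omega>) else st)"

lemma prob_SM: "M \<ge> 1 \<Longrightarrow> prob_space (spider_step_measure M)"
  unfolding spider_step_measure_def
  by (intro prob_space_pair prob_space_measure_pmf prob_space_exponential_density) auto

lemma tau_meas[measurable]: "tau \<in> borel_measurable (spider_step_measure M)"
  unfolding tau_def spider_step_measure_def by measurable

lemma fst_meas[measurable]: "(\<lambda>x. fst x) \<in> measurable (spider_step_measure M) (count_space UNIV)"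
  unfolding spider_step_measure_def by measurable

lemma posn_meas:
  "(\<lambda>x. posn s n st (fst x) (snd x)) \<in> measurable (borel \<Otimes>\<^sub>M stream_space (spider_step_measure M)) (count_space UNIV)"
proof (induction n arbitrary: st)
  case 0 then show ?case by simp
next
  case (Suc n)
  let ?N = "borel \<Otimes>\<^sub>M stream_space (spider_step_measure M)"
  have g: "(\<lambda>x. fst (shd (snd x))) \<in> measurable ?N (count_space UNIV)" by measurable
  have f: "(\<lambda>x. posn s n (spider_move s i st) (fst x - tau (shd (snd x))) (stl (snd x))) \<in> measurable ?N (count_space UNIV)" for i
  proof -
    have m: "(\<lambda>x. (fst x - tau (shd (snd x)), stl (snd x))) \<in> measurable ?N ?N" by measurable
    show ?thesis using measurable_comp[OF m Suc[of "spider_move s i st"]] by (simp add: comp_def)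
  qed
  have t: "(\<lambda>x. posn s n (spider_move s (fst (shd (snd x))) st) (fst x - tau (shd (snd x))) (stl (snd x))) \<in> measurable ?N (count_space UNIV)"
    by (rule measurable_compose_countable[OF f g])
  have p: "Measurable.pred ?N (\<lambda>x. tau (shd (snd x)) \<le> fst x)" by measurable
  have "(\<lambda>x. if tau (shd (snd x)) \<le> fst x then posn s n (spider_move s (fst (shd (snd x))) st) (fst x - tau (shd (snd x))) (stl (snd x)) else st) \<in> measurable ?N (count_space UNIV)"
    using t p by (intro measurable_If) (auto simp: pred_def)
  then show ?case by simp
qed

lemma expdens_int1:
  assumes l: "l > 0" shows "(\<integral>\<^sup>+x. ennreal (exponential_density l x) \<partial>lborel) = 1"
proof -
  interpret P: prob_space "density lborel (exponential_density l)"
    by (rule prob_space_exponential_density[OF l])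
  have "emeasure (density lborel (exponential_density l)) UNIV = 1"
    using P.emeasure_space_1 by simp
  then show ?thesis by (subst (asm) emeasure_density) auto
qed

lemma laplace:
  assumes l: "l > 0" and th: "\<theta> > 0"
  shows "(\<integral>\<^sup>+x. ennreal (exp (- \<theta> * max 0 x)) \<partial>density lborel (exponential_density l)) = ennreal (l / (l + \<theta>))"
proof -
  have eq: "ennreal (exponential_density l x) * ennreal (exp (- \<theta> * max 0 x))
      = ennreal (l / (l + \<theta>)) * ennreal (exponential_density (l + \<theta>) x)" for x
  proof (cases "x < 0")
    case True then show ?thesis by (simp add: exponential_density_def)
  next
    case False
    have e: "exp (- x * l) * exp (- \<theta> * x) = exp (- x * (l + \<theta>))"
    proof -
      have "- x * (l + \<theta>) = - x * l + - \<theta> * x" by (simp add: algebra_simps)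
      then show ?thesis by (simp only: exp_add)
    qed
    have "l * exp (- x * l) * exp (- \<theta> * x) = l * exp (- x * (l + \<theta>))" by (simp only: mult.assoc e)
    also have "\<dots> = l / (l + \<theta>) * ((l + \<theta>) * exp (- x * (l + \<theta>)))" using l th by simp
    finally have "l * exp (- x * l) * exp (- \<theta> * x) = l / (l + \<theta>) * ((l + \<theta>) * exp (- x * (l + \<theta>)))" .
    then show ?thesis using False l th
      by (simp add: exponential_density_def ennreal_mult[symmetric] max_def)
  qed
  have "(\<integral>\<^sup>+x. ennreal (exp (- \<theta> * max 0 x)) \<partial>density lborel (exponential_density l))
      = (\<integral>\<^sup>+x. ennreal (exponential_density l x) * ennreal (exp (- \<theta> * max 0 x)) \<partial>lborel)"
    by (subst nn_integral_density) auto
  also have "\<dots> = (\<integral>\<^sup>+x. ennreal (l / (l + \<theta>)) * ennreal (exponential_density (l + \<theta>) x) \<partial>lborel)"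
    unfolding eq ..
  also have "\<dots> = ennreal (l / (l + \<theta>)) * (\<integral>\<^sup>+x. ennreal (exponential_density (l + \<theta>) x) \<partial>lborel)"
    by (subst nn_integral_cmult) auto
  also have "\<dots> = ennreal (l / (l + \<theta>))" using expdens_int1[of "l + \<theta>"] l th by simp
  finally show ?thesis .
qed

lemma avg_bound:
  assumes v: "valid M s st" and M: "M \<ge> 3" and s: "s \<ge> 2"
  shows "(\<integral>\<^sup>+c. ennreal (Gf s (spider_move s c st)) \<partial>measure_pmf (pmf_of_set ({0, 1} \<times> {..<M})))
     \<le> ennreal (Gf s st + 2)"
proof -
  let ?A = "{0::nat, 1} \<times> {..<M}"
  have fin: "finite ?A" by auto
  have "(0, 0) \<in> ?A" using M by simp
  then have ne: "?A \<noteq> {}" by blast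
  have card: "card ?A = 2 * M" by (simp add: card_cartesian_product)
  have "(\<integral>\<^sup>+c. ennreal (Gf s (spider_move s c st)) \<partial>measure_pmf (pmf_of_set ?A))
      = (\<Sum>c\<in>?A. ennreal (Gf s (spider_move s c st))) / of_nat (card ?A)"
    by (rule nn_integral_pmf_of_set[OF ne fin])
  also have "\<dots> = ennreal ((\<Sum>c\<in>?A. Gf s (spider_move s c st)) / real (2 * M))"
  proof -
    have "0 \<le> (\<Sum>c\<in>?A. Gf s (spider_move s c st))" by (simp add: sum_nonneg Gf_nonneg)
    then show ?thesis using M card by (simp add: sum_ennreal Gf_nonneg divide_ennreal ennreal_of_nat_eq_real_of_nat)
  qed
  also have "\<dots> \<le> ennreal (Gf s st + 2)"
  proof (rule ennreal_leI)
    have "(\<Sum>c\<in>?A. Gf s (spider_move s c st)) \<le> 2 * real M * Gf s st + 4 * real M"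
      using drift[OF v M s] by simp
    then show "(\<Sum>c\<in>?A. Gf s (spider_move s c st)) / real (2 * M) \<le> Gf s st + 2"
      using M by (simp add: divide_le_eq algebra_simps)
  qed
  finally show ?thesis .
qed

lemma step_bound:
  assumes v: "valid M s st" and M: "M \<ge> 3" and s: "s \<ge> 2" and th: "\<theta> > 0"
  shows "(\<integral>\<^sup>+x. (if tau x \<le> t then ennreal (Gf s (spider_move s (fst x) st) + 2 * (2 * real M / \<theta>) * exp (\<theta> * (t - tau x)))
            else ennreal (Gf s st)) \<partial>spider_step_measure M)
     \<le> ennreal (Gf s st + 2 * (2 * real M / \<theta>) * exp (\<theta> * t))"
proof -
  define c where "c = 2 * real M / \<theta>"
  define l where "l = 2 * real M"
  have l: "l > 0" using M l_def by simp
  have c0: "c \<ge> 0" using th c_def by simp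
  let ?A = "{0::nat, 1} \<times> {..<M}"
  let ?P = "measure_pmf (pmf_of_set ?A)"
  let ?E = "density lborel (exponential_density l)"
  have fin: "finite ?A" by auto
  have "(0, 0) \<in> ?A" using M by simp
  then have ne: "?A \<noteq> {}" by blast
  interpret P: prob_space ?P by (rule prob_space_measure_pmf)
  interpret E: prob_space ?E by (rule prob_space_exponential_density[OF l])
  interpret PE: pair_sigma_finite ?P ?E ..
  define h where "h x = (if tau x \<le> t then ennreal (Gf s (spider_move s (fst x) st) + 2 * c * exp (\<theta> * (t - tau x)))
            else ennreal (Gf s st))" for x
  have SM: "spider_step_measure M = ?P \<Otimes>\<^sub>M ?E" by (simp add: spider_step_measure_def l_def)
  have gm: "(\<lambda>x. ennreal (Gf s (spider_move s (fst x) st) + 2 * c * exp (\<theta> * (t - tau x)))) \<in> borel_measurable (?P \<Otimes>\<^sub>M ?E)"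
  proof -
    have "(\<lambda>x. Gf s (spider_move s (fst x) st)) \<in> borel_measurable (?P \<Otimes>\<^sub>M ?E)"
      by (rule measurable_comp[OF measurable_fst, unfolded comp_def]) simp
    moreover have "tau \<in> borel_measurable (?P \<Otimes>\<^sub>M ?E)" unfolding tau_def by measurable
    ultimately show ?thesis by measurable
  qed
  have hm: "h \<in> borel_measurable (?P \<Otimes>\<^sub>M ?E)"
  proof -
    have "tau \<in> borel_measurable (?P \<Otimes>\<^sub>M ?E)" unfolding tau_def by measurable
    then show ?thesis unfolding h_def using gm by measurable
  qed
  define K where "K = 2 * (1 + c) * exp (\<theta> * t)"
  have inner: "(\<integral>\<^sup>+ x. h (x, y) \<partial>?P) \<le> ennreal (Gf s st) + ennreal K * ennreal (exp (- \<theta> * max 0 y))" for y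
  proof (cases "max 0 y \<le> t")
    case True
    have tx: "tau (x, y) = max 0 y" for x by (simp add: tau_def)
    define k where "k = 2 * c * exp (\<theta> * (t - max 0 y))"
    have k0: "k \<ge> 0" using c0 k_def by simp
    have "(\<integral>\<^sup>+ x. h (x, y) \<partial>?P) = (\<integral>\<^sup>+ x. ennreal (Gf s (spider_move s x st)) + ennreal k \<partial>?P)"
      using True k0 by (intro nn_integral_cong) (simp add: h_def tx k_def Gf_nonneg ennreal_plus)
    also have "\<dots> = (\<integral>\<^sup>+ x. ennreal (Gf s (spider_move s x st)) \<partial>?P) + ennreal k"
      by (subst nn_integral_add) (auto simp: measure_pmf.emeasure_space_1)
    also have "\<dots> \<le> ennreal (Gf s st + 2) + ennreal k"
      using avg_bound[OF v M s] by (intro add_mono) auto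
    also have "\<dots> = ennreal (Gf s st + 2 + k)" using k0 Gf_nonneg[of s st] by (simp add: ennreal_plus)
    also have "\<dots> \<le> ennreal (Gf s st + K * exp (- \<theta> * max 0 y))"
    proof (rule ennreal_leI)
      have e1: "exp (\<theta> * (t - max 0 y)) \<ge> 1" using True th by simp
      have "exp (\<theta> * (t - max 0 y)) = exp (\<theta> * t) * exp (- \<theta> * max 0 y)"
        by (simp add: exp_add[symmetric] algebra_simps)
      then have "K * exp (- \<theta> * max 0 y) = 2 * (1 + c) * exp (\<theta> * (t - max 0 y))" by (simp add: K_def)
      then show "Gf s st + 2 + k \<le> Gf s st + K * exp (- \<theta> * max 0 y)"
        using e1 c0 by (simp add: k_def algebra_simps)
    qed
    also have "\<dots> = ennreal (Gf s st) + ennreal K * ennreal (exp (- \<theta> * max 0 y))"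
      using Gf_nonneg[of s st] c0 by (simp add: K_def ennreal_plus ennreal_mult)
    finally show ?thesis .
  next
    case False
    then have "h (x, y) = ennreal (Gf s st)" for x by (auto simp: h_def tau_def)
    then have "(\<integral>\<^sup>+ x. h (x, y) \<partial>?P) = ennreal (Gf s st)" by (simp add: measure_pmf.emeasure_space_1)
    then show ?thesis by simp
  qed
  have "(\<integral>\<^sup>+x. h x \<partial>spider_step_measure M) = (\<integral>\<^sup>+ y. (\<integral>\<^sup>+ x. h (x, y) \<partial>?P) \<partial>?E)"
    unfolding SM by (rule PE.nn_integral_snd[OF hm, symmetric])
  also have "\<dots> \<le> (\<integral>\<^sup>+ y. ennreal (Gf s st) + ennreal K * ennreal (exp (- \<theta> * max 0 y)) \<partial>?E)"
    by (intro nn_integral_mono inner)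
  also have "\<dots> = ennreal (Gf s st) + ennreal K * (\<integral>\<^sup>+ y. ennreal (exp (- \<theta> * max 0 y)) \<partial>?E)"
  proof -
    have E1: "emeasure ?E UNIV = 1" using E.emeasure_space_1 by simp
    show ?thesis by (subst nn_integral_add) (auto simp: E1 nn_integral_cmult)
  qed
  also have "\<dots> = ennreal (Gf s st) + ennreal K * ennreal (l / (l + \<theta>))"
    using laplace[OF l th] by simp
  also have "\<dots> = ennreal (Gf s st + 2 * c * exp (\<theta> * t))"
  proof -
    have lt: "l + \<theta> > 0" using l th by simp
    have cl: "c = l / \<theta>" by (simp add: c_def l_def)
    have aux: "\<And>a b d::real. a \<noteq> 0 \<Longrightarrow> b \<noteq> 0 \<Longrightarrow> a / b * (d / a) = d / b"
      by (simp add: field_simps)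
    have "1 + l / \<theta> = (l + \<theta>) / \<theta>" using th by (simp add: field_simps)
    then have "(1 + c) * (l / (l + \<theta>)) = (l + \<theta>) / \<theta> * (l / (l + \<theta>))" unfolding cl by simp
    also have "\<dots> = c" unfolding cl using lt th by (intro aux) auto
    finally have "(1 + c) * (l / (l + \<theta>)) = c" .
    then have "K * (l / (l + \<theta>)) = 2 * c * exp (\<theta> * t)"
      unfolding K_def by (metis mult.commute mult.left_commute)
    then show ?thesis using Gf_nonneg[of s st] c0 l th
      by (simp add: ennreal_plus ennreal_mult[symmetric] K_def)
  qed
  finally show ?thesis unfolding h_def c_def .
qed

lemma posn_meas1:
  "(\<lambda>\<omega>. posn s n st t \<omega>) \<in> measurable (stream_space (spider_step_measure M)) (count_space UNIV)"
proof -
  have "(\<lambda>\<omega>. (t, \<omega>)) \<in> measurable (stream_space (spider_step_measure M)) (borel \<Otimes>\<^sub>M stream_space (spider_step_measure M))"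
    by measurable
  from measurable_comp[OF this posn_meas] show ?thesis by (simp add: comp_def)
qed

lemma Gposn_meas:
  "(\<lambda>\<omega>. g (posn s n st t \<omega>) :: ennreal) \<in> borel_measurable (stream_space (spider_step_measure M))"
  using measurable_comp[OF posn_meas1 borel_measurable_count_space] by (simp add: comp_def)

lemma AE_step:
  assumes M: "M \<ge> 1" shows "AE x in spider_step_measure M. snd (fst x) < M"
proof -
  let ?A = "{0::nat, 1} \<times> {..<M}"
  let ?P = "measure_pmf (pmf_of_set ?A)"
  let ?E = "density lborel (exponential_density (2 * real M))"
  have "(0, 0) \<in> ?A" using M by simp
  then have ne: "?A \<noteq> {}" by blast
  interpret E: prob_space ?E by (rule prob_space_exponential_density) (use M in simp)
  interpret PE: pair_sigma_finite ?P ?E ..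
  have "AE x in ?P \<Otimes>\<^sub>M ?E. snd (fst x) < M"
  proof (rule PE.AE_pair_measure)
    show "{x \<in> space (?P \<Otimes>\<^sub>M ?E). snd (fst x) < M} \<in> sets (?P \<Otimes>\<^sub>M ?E)"
    proof -
      have "(\<lambda>x. snd (fst x) < M) \<in> measurable (?P \<Otimes>\<^sub>M ?E) (count_space UNIV)"
        by (rule measurable_comp[OF measurable_fst, unfolded comp_def]) simp
      then show ?thesis unfolding pred_def[symmetric] .
    qed
    show "AE x in ?P. AE y in ?E. snd (fst (x, y)) < M"
      using ne by (auto simp: AE_measure_pmf_iff)
  qed
  then show ?thesis unfolding spider_step_measure_def .
qed

lemma expect_bound:
  assumes M: "M \<ge> 3" and s: "s \<ge> 2" and th: "\<theta> > 0"
  shows "valid M s st \<Longrightarrow> (\<integral>\<^sup>+\<omega>. ennreal (Gf s (posn s n st t \<omega>)) \<partial>spider_space M)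
     \<le> ennreal (Gf s st + 2 * (2 * real M / \<theta>) * exp (\<theta> * t))"
proof (induction n arbitrary: st t)
  interpret SMp: prob_space "spider_step_measure M" by (rule prob_SM) (use M in simp)
  interpret OM: prob_space "spider_space M" unfolding spider_space_def by (rule SMp.prob_space_stream_space)
  {
  case 0
  have "(\<integral>\<^sup>+\<omega>. ennreal (Gf s (posn s 0 st t \<omega>)) \<partial>spider_space M) = ennreal (Gf s st)"
    by (simp add: OM.emeasure_space_1)
  also have "\<dots> \<le> ennreal (Gf s st + 2 * (2 * real M / \<theta>) * exp (\<theta> * t))"
    using th by (intro ennreal_leI) simp
  finally show ?case .
  next
  case (Suc n)
  let ?c = "2 * real M / \<theta>"
  define h where "h x = (if tau x \<le> t then ennreal (Gf s (spider_move s (fst x) st) + 2 * ?c * exp (\<theta> * (t - tau x)))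
            else ennreal (Gf s st))" for x
  have "(\<integral>\<^sup>+\<omega>. ennreal (Gf s (posn s (Suc n) st t \<omega>)) \<partial>spider_space M)
     = (\<integral>\<^sup>+x. (\<integral>\<^sup>+\<omega>. ennreal (Gf s (posn s (Suc n) st t (x ## \<omega>))) \<partial>spider_space M) \<partial>spider_step_measure M)"
    unfolding spider_space_def by (rule SMp.nn_integral_stream_space[OF Gposn_meas])
  also have "\<dots> \<le> (\<integral>\<^sup>+x. h x \<partial>spider_step_measure M)"
  proof (rule nn_integral_mono_AE)
    show "AE x in spider_step_measure M. (\<integral>\<^sup>+\<omega>. ennreal (Gf s (posn s (Suc n) st t (x ## \<omega>))) \<partial>spider_space M) \<le> h x"
    proof -
    have ae: "AE x in spider_step_measure M. snd (fst x) < M" using AE_step M by simp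
    show ?thesis
    proof (rule AE_mp[OF ae], rule AE_I2, rule impI)
      fix x assume "x \<in> space (spider_step_measure M)" and x: "snd (fst x) < M"
      show "(\<integral>\<^sup>+\<omega>. ennreal (Gf s (posn s (Suc n) st t (x ## \<omega>))) \<partial>spider_space M) \<le> h x"
      proof (cases "tau x \<le> t")
        case True
        have v': "valid M s (spider_move s (fst x) st)" by (rule move_valid[OF Suc.prems x])
        have "(\<integral>\<^sup>+\<omega>. ennreal (Gf s (posn s (Suc n) st t (x ## \<omega>))) \<partial>spider_space M)
           = (\<integral>\<^sup>+\<omega>. ennreal (Gf s (posn s n (spider_move s (fst x) st) (t - tau x) \<omega>)) \<partial>spider_space M)"
          using True by simp
        also have "\<dots> \<le> h x" using Suc.IH[OF v', of "t - tau x"] True by (simp add: h_def)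
        finally show ?thesis .
      next
        case False
        then show ?thesis by (simp add: h_def OM.emeasure_space_1)
      qed
    qed
    qed
  qed
  also have "\<dots> \<le> ennreal (Gf s st + 2 * ?c * exp (\<theta> * t))"
    unfolding h_def by (rule step_bound[OF Suc.prems M s th])
  finally show ?case .
  }
qed

primrec chainf :: "nat \<Rightarrow> spider_state \<Rightarrow> ((nat \<times> nat) \<times> real) stream \<Rightarrow> nat \<Rightarrow> spider_state" where
  "chainf s st \<omega> 0 = st"
| "chainf s st \<omega> (Suc m) = chainf s (spider_move s (fst (shd \<omega>)) st) (stl \<omega>) m"

lemma chainf_Suc: "chainf s st \<omega> (Suc k) = spider_move s (fst (\<omega> !! k)) (chainf s st \<omega> k)"
  by (induction k arbitrary: st \<omega>) auto

lemma chain_chainf: "spider_chain s \<omega> k = chainf s (tree_root, [0]) \<omega> k"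
  by (induction k) (auto simp: chainf_Suc simp del: chainf.simps(2))

definition Tsum :: "((nat \<times> nat) \<times> real) stream \<Rightarrow> nat \<Rightarrow> real" where
  "Tsum \<omega> k = (\<Sum>i\<le>k. snd (\<omega> !! i))"

lemma Tsum_Suc: "Tsum \<omega> (Suc k) = snd (shd \<omega>) + Tsum (stl \<omega>) k"
  unfolding Tsum_def sum.atMost_Suc_shift by simp

lemma Tsum_0: "Tsum \<omega> 0 = snd (shd \<omega>)"
  unfolding Tsum_def by simp

lemma Tsum_ge: "(\<forall>i. snd (\<omega> !! i) \<ge> 0) \<Longrightarrow> Tsum \<omega> k \<ge> snd (shd \<omega>)"
proof -
  assume nn: "\<forall>i. snd (\<omega> !! i) \<ge> 0"
  have "Tsum \<omega> k = snd (\<omega> !! 0) + (\<Sum>i\<in>{1..k}. snd (\<omega> !! i))"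
    unfolding Tsum_def by (simp add: sum.atMost_shift atMost_atLeast0 sum.atLeast_Suc_atMost)
  moreover have "(\<Sum>i\<in>{1..k}. snd (\<omega> !! i)) \<ge> 0" using nn by (simp add: sum_nonneg)
  ultimately show ?thesis by simp
qed

lemma posn_chainf:
  "(\<forall>i. snd (\<omega> !! i) \<ge> 0) \<Longrightarrow> posn s n st t \<omega> = chainf s st \<omega> (card {k. k < n \<and> Tsum \<omega> k \<le> t})"
proof (induction n arbitrary: st t \<omega>)
  case 0 then show ?case by simp
next
  case (Suc n)
  have nn0: "snd (shd \<omega>) \<ge> 0" using Suc.prems by (metis snth.simps(1))
  have tau0: "tau (shd \<omega>) = snd (shd \<omega>)" using nn0 by (simp add: tau_def)
  have nns: "\<forall>i. snd (stl \<omega> !! i) \<ge> 0" using Suc.prems by (metis snth.simps(2))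
  show ?case
  proof (cases "snd (shd \<omega>) \<le> t")
    case True
    have "{k. k < Suc n \<and> Tsum \<omega> k \<le> t} = insert 0 (Suc ` {k. k < n \<and> Tsum (stl \<omega>) k \<le> t - snd (shd \<omega>)})"
    proof (intro set_eqI iffI)
      fix k assume k: "k \<in> {k. k < Suc n \<and> Tsum \<omega> k \<le> t}"
      show "k \<in> insert 0 (Suc ` {k. k < n \<and> Tsum (stl \<omega>) k \<le> t - snd (shd \<omega>)})"
      proof (cases k)
        case 0 then show ?thesis by simp
      next
        case (Suc k') then show ?thesis using k by (auto simp: Tsum_Suc)
      qed
    next
      fix k assume k: "k \<in> insert 0 (Suc ` {k. k < n \<and> Tsum (stl \<omega>) k \<le> t - snd (shd \<omega>)})"
      show "k \<in> {k. k < Suc n \<and> Tsum \<omega> k \<le> t}"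
        using k True by (auto simp: Tsum_Suc Tsum_0)
    qed
    then have "card {k. k < Suc n \<and> Tsum \<omega> k \<le> t} = Suc (card {k. k < n \<and> Tsum (stl \<omega>) k \<le> t - snd (shd \<omega>)})"
      by (simp add: card_image)
    then show ?thesis using True Suc.IH[OF nns] tau0 by simp
  next
    case False
    have E: "{k. k < Suc n \<and> Tsum \<omega> k \<le> t} = {}"
    proof -
      have "\<not> Tsum \<omega> k \<le> t" for k using False Tsum_ge[OF Suc.prems, of k] by linarith
      then show ?thesis by auto
    qed
    have "posn s (Suc n) st t \<omega> = st" using False tau0 by simp
    then show ?thesis by (simp only: E card.empty chainf.simps(1))
  qed
qed

lemma spider_pos_chainf: "spider_pos s \<omega> t = chainf s (tree_root, [0]) \<omega> (card {k. Tsum \<omega> k \<le> t})"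
  by (simp add: spider_pos_def spider_njumps_def chain_chainf Tsum_def)

lemma pos_eventually:
  assumes nn: "\<forall>i. snd (\<omega> !! i) \<ge> 0"
  shows "spider_pos s \<omega> t = (tree_root, [0]) \<or> (\<exists>N. \<forall>n\<ge>N. spider_pos s \<omega> t = posn s n (tree_root, [0]) t \<omega>)"
proof (cases "finite {k. Tsum \<omega> k \<le> t}")
  case True
  define N where "N = Suc (Max (insert 0 {k. Tsum \<omega> k \<le> t}))"
  have "{k. k < n \<and> Tsum \<omega> k \<le> t} = {k. Tsum \<omega> k \<le> t}" if "n \<ge> N" for n
  proof -
    have "k < n" if "Tsum \<omega> k \<le> t" for k
    proof -
      have "k \<le> Max (insert 0 {k. Tsum \<omega> k \<le> t})" using True that by (intro Max_ge) auto
      then show ?thesis using \<open>n \<ge> N\<close> N_def by simp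
    qed
    then show ?thesis by auto
  qed
  then show ?thesis using posn_chainf[OF nn] spider_pos_chainf by metis
next
  case False
  then show ?thesis by (simp add: spider_pos_chainf)
qed

lemma posn_valid:
  "valid M s st \<Longrightarrow> (\<forall>i. snd (fst (\<omega> !! i)) < M) \<Longrightarrow> valid M s (posn s n st t \<omega>)"
proof (induction n arbitrary: st t \<omega>)
  case 0 then show ?case by simp
next
  case (Suc n)
  have v': "valid M s (spider_move s (fst (shd \<omega>)) st)"
    using move_valid[OF Suc.prems(1)] Suc.prems(2) by (metis snth.simps(1))
  have "\<forall>i. snd (fst (stl \<omega> !! i)) < M" using Suc.prems(2) by (metis snth.simps(2))
  then show ?case using Suc.IH[OF v'] Suc.prems by simp
qed

lemma AE_good:
  assumes M: "M \<ge> 1"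
  shows "AE \<omega> in spider_space M. (\<forall>i. snd (fst (\<omega> !! i)) < M \<and> snd (\<omega> !! i) \<ge> 0)"
proof -
  interpret SMp: prob_space "spider_step_measure M" by (rule prob_SM[OF M])
  let ?A = "{0::nat, 1} \<times> {..<M}"
  let ?P = "measure_pmf (pmf_of_set ?A)"
  let ?E = "density lborel (exponential_density (2 * real M))"
  interpret E: prob_space ?E by (rule prob_space_exponential_density) (use M in simp)
  interpret PE: pair_sigma_finite ?P ?E ..
  have pm: "Measurable.pred (spider_step_measure M) (\<lambda>x. snd (fst x) < M \<and> snd x \<ge> 0)"
  proof -
    have a: "(\<lambda>x. snd (fst x) < M) \<in> measurable (spider_step_measure M) (count_space UNIV)"
      using measurable_comp[OF fst_meas, of "\<lambda>c. snd c < M" _ M] by (simp add: comp_def)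
    have b: "Measurable.pred (spider_step_measure M) (\<lambda>x. snd x \<ge> 0)"
      unfolding spider_step_measure_def by measurable
    show ?thesis using a b by measurable
  qed
  have ae0: "AE x in spider_step_measure M. snd x \<ge> 0"
  proof -
    have "AE x in ?P \<Otimes>\<^sub>M ?E. snd x \<ge> 0"
    proof (rule PE.AE_pair_measure)
      show "{x \<in> space (?P \<Otimes>\<^sub>M ?E). snd x \<ge> 0} \<in> sets (?P \<Otimes>\<^sub>M ?E)" by measurable
      have "AE y in ?E. 0 \<le> y"
        by (subst AE_density) (auto simp: exponential_density_def intro!: AE_I2 split: if_splits)
      then show "AE x in ?P. AE y in ?E. 0 \<le> snd (x, y)" by simp
    qed
    then show ?thesis unfolding spider_step_measure_def .
  qed
  have "AE x in spider_step_measure M. snd (fst x) < M \<and> snd x \<ge> 0"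
    using AE_step[OF M] ae0 by eventually_elim auto
  from SMp.AE_stream_all[OF pm this] show ?thesis
    unfolding spider_space_def stream_all_def by simp
qed

lemma tree_dist_root: "tree_dist tree_root x = length x"
  by (simp add: tree_dist_def tree_root_def)

definition Bd :: "nat \<Rightarrow> nat \<Rightarrow> nat \<Rightarrow> real" where
  "Bd M s n = (1 + 4 * real M * real (Suc n) * exp 1) / (real s * real (Suc n)) + 3 * real s / (2 * real (Suc n))"

lemma int_Dl_bound:
  assumes M: "M \<ge> 3" and s: "s \<ge> 2"
  shows "(\<integral>\<^sup>+\<omega>. ennreal (real (length (fst (posn s k (tree_root, [0]) (real (Suc n)) \<omega>))) / real (Suc n)) \<partial>spider_space M)
     \<le> ennreal (Bd M s n)"
proof -
  let ?st = "(tree_root, [0::nat])"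
  let ?t = "real (Suc n)"
  let ?G = "\<lambda>\<omega>. Gf s (posn s k ?st ?t \<omega>)"
  define a where "a = 1 / (real s * real (Suc n))"
  define b where "b = 3 * real s / (2 * real (Suc n))"
  have a0: "a \<ge> 0" and b0: "b \<ge> 0" by (auto simp: a_def b_def)
  have sv: "valid M s ?st" using start_valid[of M s] M s by simp
  have "(\<integral>\<^sup>+\<omega>. ennreal (real (length (fst (posn s k ?st ?t \<omega>))) / ?t) \<partial>spider_space M)
      \<le> (\<integral>\<^sup>+\<omega>. ennreal a * ennreal (?G \<omega>) + ennreal b \<partial>spider_space M)"
  proof (rule nn_integral_mono_AE)
    show "AE \<omega> in spider_space M. ennreal (real (length (fst (posn s k ?st ?t \<omega>))) / ?t) \<le> ennreal a * ennreal (?G \<omega>) + ennreal b"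
      using AE_good[of M] M
    proof -
      have ae: "AE \<omega> in spider_space M. (\<forall>i. snd (fst (\<omega> !! i)) < M \<and> snd (\<omega> !! i) \<ge> 0)"
        using AE_good[of M] M by simp
      show ?thesis
      proof (rule AE_mp[OF ae], rule AE_I2, rule impI)
        fix \<omega> assume "\<omega> \<in> space (spider_space M)" and g: "\<forall>i. snd (fst (\<omega> !! i)) < M \<and> snd (\<omega> !! i) \<ge> 0"
        have v: "valid M s (posn s k ?st ?t \<omega>)" using posn_valid[OF sv] g by simp
        have d: "real (length (fst (posn s k ?st ?t \<omega>))) \<le> ?G \<omega> / real s + 3 * real s / 2"
          using dist_bound[OF v] s by simp
        have "real (length (fst (posn s k ?st ?t \<omega>))) / ?t \<le> (?G \<omega> / real s + 3 * real s / 2) / ?t"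
          using d by (simp add: divide_right_mono)
        also have "\<dots> = a * ?G \<omega> + b"
        proof -
          have aux: "\<And>x y G::real. x > 0 \<Longrightarrow> y > 0 \<Longrightarrow> (G / y + 3 * y / 2) / x = 1 / (y * x) * G + 3 * y / (2 * x)"
            by (simp add: field_simps)
          show ?thesis unfolding a_def b_def by (rule aux) (use s in auto)
        qed
        finally have "real (length (fst (posn s k ?st ?t \<omega>))) / ?t \<le> a * ?G \<omega> + b" .
        then have r: "ennreal (real (length (fst (posn s k ?st ?t \<omega>))) / ?t) \<le> ennreal (a * ?G \<omega> + b)"
          by (rule ennreal_leI)
        have G0: "0 \<le> ?G \<omega>" by (rule Gf_nonneg)
        have e: "ennreal (a * ?G \<omega> + b) = ennreal a * ennreal (?G \<omega>) + ennreal b"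
          using a0 b0 G0 by (simp add: ennreal_plus ennreal_mult)
        show "ennreal (real (length (fst (posn s k ?st ?t \<omega>))) / ?t) \<le> ennreal a * ennreal (?G \<omega>) + ennreal b"
          using r unfolding e .
      qed
    qed
  qed
  also have "\<dots> = ennreal a * (\<integral>\<^sup>+\<omega>. ennreal (?G \<omega>) \<partial>spider_space M) + ennreal b"
  proof -
    interpret SMp: prob_space "spider_step_measure M" by (rule prob_SM) (use M in simp)
    interpret OM: prob_space "spider_space M" unfolding spider_space_def by (rule SMp.prob_space_stream_space)
    have m: "(\<lambda>\<omega>. ennreal (?G \<omega>)) \<in> borel_measurable (spider_space M)"
      unfolding spider_space_def by (rule Gposn_meas)
    show ?thesis using m by (simp add: nn_integral_add nn_integral_cmult OM.emeasure_space_1)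
  qed
  also have "\<dots> \<le> ennreal a * ennreal (1 + 2 * (2 * real M / (1 / ?t)) * exp (1 / ?t * ?t)) + ennreal b"
    using expect_bound[OF M s _ sv, of "1 / ?t" k ?t] start_Gf[of s]
    by (intro add_mono mult_left_mono) auto
  also have "\<dots> = ennreal (Bd M s n)"
  proof -
    define X where "X = 1 + 2 * (2 * real M / (1 / ?t)) * exp (1 / ?t * ?t)"
    have X0: "0 \<le> X" by (simp add: X_def)
    have eq: "a * X + b = Bd M s n"
      by (simp add: X_def a_def b_def Bd_def field_simps)
    have e: "ennreal (a * X + b) = ennreal a * ennreal X + ennreal b"
      using a0 b0 X0 by (simp add: ennreal_plus ennreal_mult)
    show ?thesis unfolding X_def[symmetric] e[symmetric] eq ..
  qed
  finally show ?thesis .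
qed

lemma Bd_lim: "s > 0 \<Longrightarrow> (\<lambda>n. ennreal (Bd M s n)) \<longlonglongrightarrow> ennreal (4 * real M * exp 1 / real s)"
proof -
  assume s0: "s > 0"
  have aux: "\<And>x y K::real. x > 0 \<Longrightarrow> y > 0 \<Longrightarrow> (1 + K * x) / (y * x) + 3 * y / (2 * x) = (1 / y + 3 * y / 2) / x + K / y"
    by (simp add: field_simps)
  have eq: "Bd M s n = (1 / real s + 3 * real s / 2) / real (Suc n) + 4 * real M * exp 1 / real s" for n
  proof -
    have "4 * real M * real (Suc n) * exp 1 = (4 * real M * exp 1) * real (Suc n)" by simp
    then show ?thesis unfolding Bd_def by (subst (asm) eq_commute, simp only:) (rule aux, use s0 in auto)
  qed
  have "(\<lambda>n. (1 / real s + 3 * real s / 2) / real (Suc n)) \<longlonglongrightarrow> 0"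
    using LIMSEQ_Suc[OF lim_const_over_n[of "1 / real s + 3 * real s / 2"]] by simp
  then have "(\<lambda>n. Bd M s n) \<longlonglongrightarrow> 0 + 4 * real M * exp 1 / real s"
    unfolding eq by (intro tendsto_add tendsto_const)
  then show ?thesis by (intro tendsto_ennrealI) simp
qed

lemma speed_le:
  assumes M: "M \<ge> 3" and s: "s \<ge> 2"
    and conv: "AE \<omega> in spider_space M.
           ((\<lambda>t. real (tree_dist tree_root (fst (spider_pos s \<omega> t))) / t) \<longlongrightarrow> v) at_top"
  shows "v \<le> 4 * real M * exp 1 / real s \<and> 0 \<le> v"
proof -
  interpret SMp: prob_space "spider_step_measure M" by (rule prob_SM) (use M in simp)
  interpret OM: prob_space "spider_space M" unfolding spider_space_def by (rule SMp.prob_space_stream_space)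
  let ?st = "(tree_root, [0::nat])"
  define Dl where "Dl n k \<omega> = ennreal (real (length (fst (posn s k ?st (real (Suc n)) \<omega>))) / real (Suc n))" for n k \<omega>
  define X where "X n \<omega> = liminf (\<lambda>k. Dl n k \<omega>)" for n \<omega>
  have Dlm: "Dl n k \<in> borel_measurable (spider_space M)" for n k
    unfolding Dl_def spider_space_def by (rule Gposn_meas)
  have Xm: "X n \<in> borel_measurable (spider_space M)" for n
    unfolding X_def using Dlm by (intro borel_measurable_liminf) auto
  have intX: "(\<integral>\<^sup>+\<omega>. X n \<omega> \<partial>spider_space M) \<le> ennreal (Bd M s n)" for n
  proof -
    have "(\<integral>\<^sup>+\<omega>. X n \<omega> \<partial>spider_space M) \<le> liminf (\<lambda>k. \<integral>\<^sup>+\<omega>. Dl n k \<omega> \<partial>spider_space M)"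
      unfolding X_def using Dlm by (intro nn_integral_liminf) auto
    also have "\<dots> \<le> limsup (\<lambda>k. \<integral>\<^sup>+\<omega>. Dl n k \<omega> \<partial>spider_space M)"
      by (rule Liminf_le_Limsup) simp
    also have "\<dots> \<le> ennreal (Bd M s n)"
      unfolding Dl_def using int_Dl_bound[OF M s] by (intro Limsup_bounded always_eventually) auto
    finally show ?thesis .
  qed
  have ae: "AE \<omega> in spider_space M. ennreal v \<le> liminf (\<lambda>n. X n \<omega>)"
    using AE_good[of M] M conv
  proof -
    have ae1: "AE \<omega> in spider_space M. (\<forall>i. snd (fst (\<omega> !! i)) < M \<and> snd (\<omega> !! i) \<ge> 0)"
      using AE_good[of M] M by simp
    from ae1 conv show ?thesis
    proof eventually_elim
      case (elim \<omega>)
      define f where "f t = real (tree_dist tree_root (fst (spider_pos s \<omega> t))) / t" for t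
      have nn: "\<forall>i. snd (\<omega> !! i) \<ge> 0" using elim(1) by simp
      have filt: "filterlim (\<lambda>n. real (Suc n)) at_top sequentially"
        by (rule filterlim_compose[OF filterlim_real_sequentially filterlim_Suc])
      have tl: "(f \<longlongrightarrow> v) at_top" unfolding f_def using elim(2) .
      have "(\<lambda>n. f (real (Suc n))) \<longlonglongrightarrow> v"
        by (rule filterlim_compose[OF tl filt])
      then have lim: "(\<lambda>n. ennreal (f (real (Suc n)))) \<longlonglongrightarrow> ennreal v" by (rule tendsto_ennrealI)
      have le: "ennreal (f (real (Suc n))) \<le> X n \<omega>" for n
      proof -
        let ?t = "real (Suc n)"
        from pos_eventually[OF nn, of s ?t] show ?thesis
        proof
          assume "spider_pos s \<omega> ?t = ?st"
          then have "f ?t = 0" by (simp add: f_def tree_dist_def tree_root_def)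
          then show ?thesis by simp
        next
          assume "\<exists>N. \<forall>n\<ge>N. spider_pos s \<omega> ?t = posn s n ?st ?t \<omega>"
          then obtain N where N: "\<forall>k\<ge>N. spider_pos s \<omega> ?t = posn s k ?st ?t \<omega>" by blast
          have "eventually (\<lambda>k. ennreal (f ?t) \<le> Dl n k \<omega>) sequentially"
            using N by (intro eventually_sequentiallyI[of N]) (simp add: f_def Dl_def tree_dist_root)
          then show ?thesis unfolding X_def by (rule Liminf_bounded)
        qed
      qed
      have "ennreal v = liminf (\<lambda>n. ennreal (f (real (Suc n))))"
        using lim_imp_Liminf[OF _ lim] by simp
      also have "\<dots> \<le> liminf (\<lambda>n. X n \<omega>)"
        using le by (intro Liminf_mono always_eventually) auto
      finally show ?case .
    qed
  qed
  have "ennreal v = (\<integral>\<^sup>+\<omega>. ennreal v \<partial>spider_space M)"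
    by (simp add: OM.emeasure_space_1)
  also have "\<dots> \<le> (\<integral>\<^sup>+\<omega>. liminf (\<lambda>n. X n \<omega>) \<partial>spider_space M)"
    using ae by (rule nn_integral_mono_AE)
  also have "\<dots> \<le> liminf (\<lambda>n. \<integral>\<^sup>+\<omega>. X n \<omega> \<partial>spider_space M)"
    using Xm by (intro nn_integral_liminf) auto
  also have "\<dots> \<le> liminf (\<lambda>n. ennreal (Bd M s n))"
    using intX by (intro Liminf_mono always_eventually) auto
  also have "\<dots> = ennreal (4 * real M * exp 1 / real s)"
    by (rule lim_imp_Liminf[OF _ Bd_lim]) (use s in simp_all)
  finally have le: "ennreal v \<le> ennreal (4 * real M * exp 1 / real s)" .
  have "AE \<omega> in spider_space M. 0 \<le> v"
    using conv
  proof eventually_elim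
    case (elim \<omega>)
    show ?case
    proof (rule tendsto_lowerbound[OF elim])
      show "\<forall>\<^sub>F t in at_top. 0 \<le> real (tree_dist tree_root (fst (spider_pos s \<omega> t))) / t"
        using eventually_ge_at_top[of "0::real"] by eventually_elim simp
    qed simp
  qed
  then have v0: "0 \<le> v" by simp
  have "v \<le> 4 * real M * exp 1 / real s"
    using le by (subst (asm) ennreal_le_iff) auto
  then show ?thesis using v0 by simp
qed

theorem mainTheorem6:
  fixes M :: nat and V :: "nat \<Rightarrow> real"
  assumes "M \<ge> 3"
    and "\<forall>s\<ge>2. AE \<omega> in spider_space M.
           ((\<lambda>t. real (tree_dist tree_root (fst (spider_pos s \<omega> t))) / t) \<longlongrightarrow> V s) at_top"
  shows "(V \<longlongrightarrow> 0) sequentially"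
proof (rule tendsto_sandwich[of "\<lambda>_. 0" V sequentially "\<lambda>s. 4 * real M * exp 1 / real s"])
  have b: "V s \<le> 4 * real M * exp 1 / real s \<and> 0 \<le> V s" if "s \<ge> 2" for s
    using speed_le[OF assms(1) that] assms(2) that by blast
  show "\<forall>\<^sub>F n in sequentially. 0 \<le> V n"
    using b by (intro eventually_sequentiallyI[of 2]) auto
  show "\<forall>\<^sub>F n in sequentially. V n \<le> 4 * real M * exp 1 / real n"
    using b by (intro eventually_sequentiallyI[of 2]) auto
  show "(\<lambda>_. 0) \<longlonglongrightarrow> (0::real)" by simp
  show "(\<lambda>s. 4 * real M * exp 1 / real s) \<longlonglongrightarrow> 0" by (rule lim_const_over_n)
qed

end
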